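(* Let $L_1$ be a fixed point of $L_1^+=(\mathbf{C}_1+\mathbf{D}_1L_1)(\mathbf{A}_1+\mathbf{B}_1L_1)^{-1}$ and let $L_2$ be defined by $L_2^\top = -(B_1 +D_1L_1)(A_1 + B_1^\top L_1)^{-1}$. Then these define the similarity transforms \[ \begin{bmatrix} I & 0 \\-L_1 & I \end{bmatrix} \begin{bmatrix} \mathbf{A}_1 & \mathbf{B}_1\\ \mathbf{C}_1 & \mathbf{D}_1 \end{bmatrix} \begin{bmatrix} I & 0 \\ L_1 & I \end{bmatrix} = \begin{bmatrix} \mathbf{H}_1 & \mathbf{B}_1 \\ 0 & \mathbf{H}_1' \end{bmatrix}, \qquad \begin{bmatrix} I & -L_2\\ 0 & I \end{bmatrix} \begin{bmatrix} \mathbf{D}_2 & \mathbf{C}_2\\ \mathbf{B}_2 & \mathbf{A}_2 \end{bmatrix} \begin{bmatrix} I & L_2 \\ 0 & I \end{bmatrix} = \begin{bmatrix} \mathbf{H}_2' & 0 \\ \mathbf{B}_2 & \mathbf{H}_2 \end{bmatrix}, \] where $\mathbf{H}_1 = \mathbf{A}_1 + \mathbf{B}_1L_1$, $\mathbf{H}_1' = \mathbf{D}_1 -L_1 \mathbf{B}_1$, $\mathbf{H}_2 = \mathbf{A}_2 + \mathbf{B}_2 L_2$, and $\mathbf{H}_2' = \mathbf{D}_2 - L_2 \mathbf{B}_2$. Furthermore, the spectrum of the $\mathbf{M}_1$-invariant subspace spanned by $[I; L_1]$ is $\operatorname{spec}(\mathbf{H}_1)$, the spectrum of the $\mathbf{M}_2$-invariant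 subspace spanned by $[L_2; I]$ is $\operatorname{spec}(\mathbf{H}_2)$, \[ \mathbf{H}_1 = \mathbf{A}_1 + \mathbf{B}_1L_1 = (D_2^\top + B_2 L_1 )^{-1}(A_1 + B_1^\top L_1 ), \qquad \mathbf{H}_2' = \mathbf{D}_2 - L_2 \mathbf{B}_2 = (A_1 + B_1^\top L_1)^{-\top}(D_2^\top + B_2L_1)^\top, \] and $\mathbf{H}_2'$ is similar to $\mathbf{H}_1^{-\top}$.
   Context: Two-player quadratic game with cost blocks $A_i\succ 0$, $B_i\in\mathbb{R}^{d_{-i}\times d_i}$, $D_i$ for player $i$ (cost $f_i=\tfrac12[x_i;x_{-i}]^\top\begin{bmatrix}A_i & B_i^\top\\ B_i& D_i\end{bmatrix}[x_i;x_{-i}]+a_i^\top x_i+b_i^\top x_{-i}$, $x_i\in\mathbb{R}^{d_i}$), affine conjectures $x_{-i}=L_ix_i+\ell_i$. $M_1=\begin{bmatrix}A_1 & B_1^\top\\ B_1 & D_1\end{bmatrix}$ and $M_2=\begin{bmatrix}D_2 & B_2\\ B_2^\top & A_2\end{bmatrix}$ are invertible; $\mathbf{M}_1=M_2^{-\top}M_1=\begin{bmatrix}\mathbf{A}_1 & \mathbf{B}_1\\ \mathbf{C}_1 & \mathbf{D}_1\end{bmatrix}$ and $\mathbf{M}_2=M_1^{-\top}M_2=\begin{bmatrix}\mathbf{D}_2 & \mathbf{C}_2\\ \mathbf{B}_2 & \mathbf{A}_2\end{bmatrix}$. The fixed-point update for $L_1$ is the composite best-response conjecture update; $L_2$ is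 player 2's consistent conjecture given $L_1$ (assuming $A_1 + B_1^\top L_1$ invertible). $I$ denotes the identity matrix of appropriate size. *)

theory Defs
  imports "Jordan_Normal_Form.Matrix" "Jordan_Normal_Form.Char_Poly"
          "Jordan_Normal_Form.Gauss_Jordan_Elimination"
begin

definition inv_mat :: "real mat \<Rightarrow> real mat" where
  "inv_mat A = the (mat_inverse A)"

definition pos_def_mat :: "real mat \<Rightarrow> bool" where
  "pos_def_mat A \<longleftrightarrow> A \<in> carrier_mat (dim_row A) (dim_row A) \<and> transpose_mat A = A \<and>
     (\<forall>x \<in> carrier_vec (dim_row A). x \<noteq> 0\<^sub>v (dim_row A) \<longrightarrow> x \<bullet> (A *\<^sub>v x) > 0)"

definition spec_mat :: "real mat \<Rightarrow> complex set" where
  "spec_mat H = {z. eigenvalue (map_mat complex_of_real H) z}"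

definition subspace_spec :: "real mat \<Rightarrow> real mat \<Rightarrow> complex set" where
  "subspace_spec M V = {z. \<exists>x \<in> carrier_vec (dim_col V).
      let v = map_mat complex_of_real V *\<^sub>v x in
        v \<noteq> 0\<^sub>v (dim_row V) \<and> map_mat complex_of_real M *\<^sub>v v = z \<cdot>\<^sub>v v}"

end

theory Submission imports Defs begin

lemma inv_mat_props:
  fixes A :: "real mat"
  assumes A: "A \<in> carrier_mat n n" and inv: "invertible_mat A"
  shows "inv_mat A \<in> carrier_mat n n" "A * inv_mat A = 1\<^sub>m n" "inv_mat A * A = 1\<^sub>m n"
proof -
  from inv obtain B where AB: "A * B = 1\<^sub>m (dim_row A)" and BA: "B * A = 1\<^sub>m (dim_row B)"
    unfolding invertible_mat_def inverts_mat_def by blast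
  have B: "B \<in> carrier_mat n n"
  proof -
    have "dim_col B = n" using arg_cong[OF AB, of dim_col] A by simp
    moreover have "dim_row B = n" using arg_cong[OF BA, of dim_col] A by simp
    ultimately show ?thesis by auto
  qed
  have "A \<in> Units (ring_mat TYPE(real) n ())"
    unfolding Units_def ring_mat_simps using A B AB BA by auto
  then have "mat_inverse A \<noteq> None" using mat_inverse(1)[OF A, of "()"] by auto
  then obtain C where C: "mat_inverse A = Some C" by auto
  from mat_inverse(2)[OF A C] have "A * C = 1\<^sub>m n \<and> C * A = 1\<^sub>m n \<and> C \<in> carrier_mat n n" .
  moreover have "inv_mat A = C" unfolding inv_mat_def C by simp
  ultimately show "inv_mat A \<in> carrier_mat n n" "A * inv_mat A = 1\<^sub>m n" "inv_mat A * A = 1\<^sub>m n" by auto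
qed

lemma inv_mat_unique:
  fixes A B :: "real mat"
  assumes A: "A \<in> carrier_mat n n" and B: "B \<in> carrier_mat n n"
    and AB: "A * B = 1\<^sub>m n" and BA: "B * A = 1\<^sub>m n"
  shows "invertible_mat A" "inv_mat A = B"
proof -
  show inv: "invertible_mat A" unfolding invertible_mat_def inverts_mat_def
    using A B AB BA by auto
  note P = inv_mat_props[OF A inv]
  have "inv_mat A = inv_mat A * (A * B)" using AB P(1) by simp
  also have "\<dots> = (inv_mat A * A) * B" using P(1) A B by simp
  also have "\<dots> = B" using P(3) B by simp
  finally show "inv_mat A = B" .
qed

lemma four_block_inj:
  assumes c: "A \<in> carrier_mat nr1 nc1" "B \<in> carrier_mat nr1 nc2"
  "C \<in> carrier_mat nr2 nc1" "D \<in> carrier_mat nr2 nc2"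
  and c': "A' \<in> carrier_mat nr1 nc1" "B' \<in> carrier_mat nr1 nc2"
  "C' \<in> carrier_mat nr2 nc1" "D' \<in> carrier_mat nr2 nc2"
  and eq: "four_block_mat A B C D = four_block_mat A' B' C' D'"
  shows "A = A' \<and> B = B' \<and> C = C' \<and> D = D'"
proof -
  have e: "\<And>i j. four_block_mat A B C D $$ (i,j) = four_block_mat A' B' C' D' $$ (i,j)"
    using eq by simp
  have "A = A'"
  proof (rule eq_matI)
    fix i j assume "i < dim_row A'" "j < dim_col A'"
    then show "A $$ (i,j) = A' $$ (i,j)" using e[of i j] c c' by auto
  qed (use c c' in auto)
  moreover have "B = B'"
  proof (rule eq_matI)
    fix i j assume "i < dim_row B'" "j < dim_col B'"
    then show "B $$ (i,j) = B' $$ (i,j)" using e[of i "j + nc1"] c c' by auto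
  qed (use c c' in auto)
  moreover have "C = C'"
  proof (rule eq_matI)
    fix i j assume "i < dim_row C'" "j < dim_col C'"
    then show "C $$ (i,j) = C' $$ (i,j)" using e[of "i + nr1" j] c c' by auto
  qed (use c c' in auto)
  moreover have "D = D'"
  proof (rule eq_matI)
    fix i j assume "i < dim_row D'" "j < dim_col D'"
    then show "D $$ (i,j) = D' $$ (i,j)" using e[of "i + nr1" "j + nc1"] c c' by auto
  qed (use c c' in auto)
  ultimately show ?thesis by blast
qed

lemma dadd_mult: fixes A B C :: "real mat"
  assumes r: "dim_row A = dim_row B" and c: "dim_col A = dim_col B" and k: "dim_col B = dim_row C"
  shows "(A + B) * C = A * C + B * C"
proof -
  have a: "A \<in> carrier_mat (dim_row B) (dim_col B)" by (rule carrier_matI[OF r c])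
  have b: "B \<in> carrier_mat (dim_row B) (dim_col B)" by (rule carrier_matI[OF refl refl])
  have cc: "C \<in> carrier_mat (dim_col B) (dim_col C)" by (rule carrier_matI[OF k[symmetric] refl])
  show ?thesis by (rule add_mult_distrib_mat[OF a b cc])
qed
lemma dminus_mult: fixes A B C :: "real mat"
  assumes r: "dim_row A = dim_row B" and c: "dim_col A = dim_col B" and k: "dim_col B = dim_row C"
  shows "(A - B) * C = A * C - B * C"
proof -
  have a: "A \<in> carrier_mat (dim_row B) (dim_col B)" by (rule carrier_matI[OF r c])
  have b: "B \<in> carrier_mat (dim_row B) (dim_col B)" by (rule carrier_matI[OF refl refl])
  have cc: "C \<in> carrier_mat (dim_col B) (dim_col C)" by (rule carrier_matI[OF k[symmetric] refl])
  show ?thesis by (rule minus_mult_distrib_mat[OF a b cc])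
qed
lemma dmult_add: fixes A B C :: "real mat"
  assumes r: "dim_row B = dim_row C" and c: "dim_col B = dim_col C" and k: "dim_col A = dim_row B"
  shows "A * (B + C) = A * B + A * C"
proof -
  have a: "A \<in> carrier_mat (dim_row A) (dim_row B)" by (rule carrier_matI[OF refl k])
  have b: "B \<in> carrier_mat (dim_row B) (dim_col B)" by (rule carrier_matI[OF refl refl])
  have cc: "C \<in> carrier_mat (dim_row B) (dim_col B)" by (rule carrier_matI[OF r[symmetric] c[symmetric]])
  show ?thesis by (rule mult_add_distrib_mat[OF a b cc])
qed
lemma dmult_minus: fixes A B C :: "real mat"
  assumes r: "dim_row B = dim_row C" and c: "dim_col B = dim_col C" and k: "dim_col A = dim_row B"
  shows "A * (B - C) = A * B - A * C"
proof -
  have a: "A \<in> carrier_mat (dim_row A) (dim_row B)" by (rule carrier_matI[OF refl k])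
  have b: "B \<in> carrier_mat (dim_row B) (dim_col B)" by (rule carrier_matI[OF refl refl])
  have cc: "C \<in> carrier_mat (dim_row B) (dim_col B)" by (rule carrier_matI[OF r[symmetric] c[symmetric]])
  show ?thesis by (rule mult_minus_distrib_mat[OF a b cc])
qed
lemma dassoc: fixes A B C :: "real mat"
  assumes k1: "dim_col A = dim_row B" and k2: "dim_col B = dim_row C"
  shows "(A * B) * C = A * (B * C)"
proof -
  have a: "A \<in> carrier_mat (dim_row A) (dim_row B)" by (rule carrier_matI[OF refl k1])
  have b: "B \<in> carrier_mat (dim_row B) (dim_row C)" by (rule carrier_matI[OF refl k2])
  have cc: "C \<in> carrier_mat (dim_row C) (dim_col C)" by (rule carrier_matI[OF refl refl])
  show ?thesis by (rule assoc_mult_mat[OF a b cc])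
qed
lemma dtrans_mult: fixes A B :: "real mat"
  assumes k: "dim_col A = dim_row B"
  shows "transpose_mat (A * B) = transpose_mat B * transpose_mat A"
proof -
  have a: "A \<in> carrier_mat (dim_row A) (dim_row B)" by (rule carrier_matI[OF refl k])
  have b: "B \<in> carrier_mat (dim_row B) (dim_col B)" by (rule carrier_matI[OF refl refl])
  show ?thesis by (rule transpose_mult[OF a b])
qed
lemma dtrans_add: fixes A B :: "real mat"
  assumes r: "dim_row A = dim_row B" and c: "dim_col A = dim_col B"
  shows "transpose_mat (A + B) = transpose_mat A + transpose_mat B"
proof -
  have a: "A \<in> carrier_mat (dim_row B) (dim_col B)" by (rule carrier_matI[OF r c])
  have b: "B \<in> carrier_mat (dim_row B) (dim_col B)" by (rule carrier_matI[OF refl refl])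
  show ?thesis by (rule transpose_add[OF a b])
qed
lemma dtrans_minus: fixes A B :: "real mat"
  assumes r: "dim_row A = dim_row B" and c: "dim_col A = dim_col B"
  shows "transpose_mat (A - B) = transpose_mat A - transpose_mat B"
proof -
  have a: "A \<in> carrier_mat (dim_row B) (dim_col B)" by (rule carrier_matI[OF r c])
  have b: "B \<in> carrier_mat (dim_row B) (dim_col B)" by (rule carrier_matI[OF refl refl])
  show ?thesis by (rule transpose_minus[OF a b])
qed
lemma dminus_eq0: fixes A B :: "real mat"
  assumes r: "dim_row A = dim_row B" and c: "dim_col A = dim_col B" and z: "A - B = 0\<^sub>m n m"
  shows "A = B"
proof (rule eq_matI)
  fix i j assume i: "i < dim_row B" and j: "j < dim_col B"
  have n: "n = dim_row B" using arg_cong[OF z, of dim_row] by simp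
  have m: "m = dim_col B" using arg_cong[OF z, of dim_col] by simp
  have "(A - B) $$ (i,j) = 0" using z i j n m by simp
  then show "A $$ (i,j) = B $$ (i,j)" using i j by simp
next
  show "dim_row A = dim_row B" by (rule r)
  show "dim_col A = dim_col B" by (rule c)
qed

lemmas mat_ring = dadd_mult dmult_add dminus_mult dmult_minus dassoc
lemmas mat_trans = dtrans_mult dtrans_add dtrans_minus transpose_uminus

lemma spec_lemma:
  fixes M V H P :: "real mat"
  assumes M: "M \<in> carrier_mat n n" and V: "V \<in> carrier_mat n k" and H: "H \<in> carrier_mat k k"
    and P: "P \<in> carrier_mat k n" and PV: "P * V = 1\<^sub>m k"
    and MV: "M * V = V * H"
  shows "subspace_spec M V = spec_mat H"
proof -
  let ?c = "map_mat complex_of_real"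
  have Mc: "?c M \<in> carrier_mat n n" and Vc: "?c V \<in> carrier_mat n k" and Hc: "?c H \<in> carrier_mat k k"
    and Pc: "?c P \<in> carrier_mat k n" using M V H P by auto
  have PVc: "?c P * ?c V = 1\<^sub>m k"
    using of_real_hom.mat_hom_mult[OF P V] PV of_real_hom.mat_hom_one by metis
  have MVc: "?c M * ?c V = ?c V * ?c H"
    using of_real_hom.mat_hom_mult[OF M V] of_real_hom.mat_hom_mult[OF V H] MV by metis
  have inj: "x = y" if "x \<in> carrier_vec k" "y \<in> carrier_vec k" "?c V *\<^sub>v x = ?c V *\<^sub>v y" for x y
  proof -
    have "x = (?c P * ?c V) *\<^sub>v x" using PVc that by simp
    also have "\<dots> = ?c P *\<^sub>v (?c V *\<^sub>v x)" using Pc Vc that by simp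
    also have "\<dots> = ?c P *\<^sub>v (?c V *\<^sub>v y)" using that by simp
    also have "\<dots> = (?c P * ?c V) *\<^sub>v y" using Pc Vc that by simp
    also have "\<dots> = y" using PVc that by simp
    finally show ?thesis .
  qed
  have key: "?c M *\<^sub>v (?c V *\<^sub>v x) = ?c V *\<^sub>v (?c H *\<^sub>v x)" if "x \<in> carrier_vec k" for x
  proof -
    have "?c M *\<^sub>v (?c V *\<^sub>v x) = (?c M * ?c V) *\<^sub>v x" using Mc Vc that by simp
    also have "\<dots> = (?c V * ?c H) *\<^sub>v x" using MVc by simp
    also have "\<dots> = ?c V *\<^sub>v (?c H *\<^sub>v x)" using Vc Hc that by simp
    finally show ?thesis .
  qed
  have sm: "?c V *\<^sub>v (z \<cdot>\<^sub>v x) = z \<cdot>\<^sub>v (?c V *\<^sub>v x)" if "x \<in> carrier_vec k" for x z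
    using mult_mat_vec[OF Vc that] .
  have z0: "?c V *\<^sub>v 0\<^sub>v k = 0\<^sub>v n" using Vc by (intro eq_vecI) (auto simp: scalar_prod_def)
  show ?thesis
  proof (rule Set.set_eqI, rule iffI)
    fix z assume "z \<in> subspace_spec M V"
    then obtain x where x: "x \<in> carrier_vec k" and nz: "?c V *\<^sub>v x \<noteq> 0\<^sub>v n"
      and ev: "?c M *\<^sub>v (?c V *\<^sub>v x) = z \<cdot>\<^sub>v (?c V *\<^sub>v x)"
      unfolding subspace_spec_def Let_def using V by auto
    have "?c V *\<^sub>v (?c H *\<^sub>v x) = ?c V *\<^sub>v (z \<cdot>\<^sub>v x)" using key[OF x] ev sm[OF x] by simp
    then have "?c H *\<^sub>v x = z \<cdot>\<^sub>v x" using inj x Hc by (meson mult_mat_vec_carrier smult_carrier_vec)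
    moreover have "x \<noteq> 0\<^sub>v k" using nz z0 by auto
    ultimately have "eigenvector (?c H) x z" unfolding eigenvector_def using x H by auto
    then show "z \<in> spec_mat H" unfolding spec_mat_def eigenvalue_def by auto
  next
    fix z assume "z \<in> spec_mat H"
    then obtain x where "eigenvector (?c H) x z" unfolding spec_mat_def eigenvalue_def by auto
    then have x: "x \<in> carrier_vec k" and nz: "x \<noteq> 0\<^sub>v k" and ev: "?c H *\<^sub>v x = z \<cdot>\<^sub>v x"
      unfolding eigenvector_def using H by auto
    have "?c V *\<^sub>v x \<noteq> 0\<^sub>v n" using inj[OF x, of "0\<^sub>v k"] z0 nz by auto
    moreover have "?c M *\<^sub>v (?c V *\<^sub>v x) = z \<cdot>\<^sub>v (?c V *\<^sub>v x)" using key[OF x] ev sm[OF x] by simp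
    ultimately show "z \<in> subspace_spec M V"
      unfolding subspace_spec_def Let_def using x V by auto
  qed
qed

theorem proposition4:
  fixes d1 d2 :: nat
    and A1 D2 :: "real mat" and B1 B2 :: "real mat" and D1 A2 :: "real mat"
    and A1b B1b C1b D1b :: "real mat" and D2b C2b B2b A2b :: "real mat"
    and L1 L2 :: "real mat"
  assumes A1: "A1 \<in> carrier_mat d1 d1" and B1: "B1 \<in> carrier_mat d2 d1" and D1: "D1 \<in> carrier_mat d2 d2"
    and A2: "A2 \<in> carrier_mat d2 d2" and B2: "B2 \<in> carrier_mat d1 d2" and D2: "D2 \<in> carrier_mat d1 d1"
    and A1_pd: "pos_def_mat A1" and A2_pd: "pos_def_mat A2"
    and M1_inv: "invertible_mat (four_block_mat A1 (transpose_mat B1) B1 D1)"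
    and M2_inv: "invertible_mat (four_block_mat D2 B2 (transpose_mat B2) A2)"
    and A1b: "A1b \<in> carrier_mat d1 d1" and B1b: "B1b \<in> carrier_mat d1 d2"
    and C1b: "C1b \<in> carrier_mat d2 d1" and D1b: "D1b \<in> carrier_mat d2 d2"
    and M1b: "four_block_mat A1b B1b C1b D1b =
      transpose_mat (inv_mat (four_block_mat D2 B2 (transpose_mat B2) A2)) *
        four_block_mat A1 (transpose_mat B1) B1 D1"
    and D2b: "D2b \<in> carrier_mat d1 d1" and C2b: "C2b \<in> carrier_mat d1 d2"
    and B2b: "B2b \<in> carrier_mat d2 d1" and A2b: "A2b \<in> carrier_mat d2 d2"
    and M2b: "four_block_mat D2b C2b B2b A2b =
      transpose_mat (inv_mat (four_block_mat A1 (transpose_mat B1) B1 D1)) *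
        four_block_mat D2 B2 (transpose_mat B2) A2"
    and L1: "L1 \<in> carrier_mat d2 d1"
    and fp_inv: "invertible_mat (A1b + B1b * L1)"
    and fp: "L1 = (C1b + D1b * L1) * inv_mat (A1b + B1b * L1)"
    and X_inv: "invertible_mat (A1 + transpose_mat B1 * L1)"
    and L2: "L2 \<in> carrier_mat d1 d2"
    and L2_def: "transpose_mat L2 = - ((B1 + D1 * L1) * inv_mat (A1 + transpose_mat B1 * L1))"
  shows
    "four_block_mat (1\<^sub>m d1) (0\<^sub>m d1 d2) (- L1) (1\<^sub>m d2) * four_block_mat (1\<^sub>m d1) (0\<^sub>m d1 d2) L1 (1\<^sub>m d2)
       = 1\<^sub>m (d1 + d2)
     \<and> four_block_mat (1\<^sub>m d1) (0\<^sub>m d1 d2) (- L1) (1\<^sub>m d2) * four_block_mat A1b B1b C1b D1b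
         * four_block_mat (1\<^sub>m d1) (0\<^sub>m d1 d2) L1 (1\<^sub>m d2)
       = four_block_mat (A1b + B1b * L1) B1b (0\<^sub>m d2 d1) (D1b - L1 * B1b)
     \<and> four_block_mat (1\<^sub>m d1) (- L2) (0\<^sub>m d2 d1) (1\<^sub>m d2) * four_block_mat (1\<^sub>m d1) L2 (0\<^sub>m d2 d1) (1\<^sub>m d2)
       = 1\<^sub>m (d1 + d2)
     \<and> four_block_mat (1\<^sub>m d1) (- L2) (0\<^sub>m d2 d1) (1\<^sub>m d2) * four_block_mat D2b C2b B2b A2b
         * four_block_mat (1\<^sub>m d1) L2 (0\<^sub>m d2 d1) (1\<^sub>m d2)
       = four_block_mat (D2b - L2 * B2b) (0\<^sub>m d1 d2) B2b (A2b + B2b * L2)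
     \<and> four_block_mat A1b B1b C1b D1b * (1\<^sub>m d1 @\<^sub>r L1) = (1\<^sub>m d1 @\<^sub>r L1) * (A1b + B1b * L1)
     \<and> subspace_spec (four_block_mat A1b B1b C1b D1b) (1\<^sub>m d1 @\<^sub>r L1) = spec_mat (A1b + B1b * L1)
     \<and> four_block_mat D2b C2b B2b A2b * (L2 @\<^sub>r 1\<^sub>m d2) = (L2 @\<^sub>r 1\<^sub>m d2) * (A2b + B2b * L2)
     \<and> subspace_spec (four_block_mat D2b C2b B2b A2b) (L2 @\<^sub>r 1\<^sub>m d2) = spec_mat (A2b + B2b * L2)
     \<and> invertible_mat (transpose_mat D2 + B2 * L1)
     \<and> A1b + B1b * L1 = inv_mat (transpose_mat D2 + B2 * L1) * (A1 + transpose_mat B1 * L1)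
     \<and> D2b - L2 * B2b = transpose_mat (inv_mat (A1 + transpose_mat B1 * L1))
                          * transpose_mat (transpose_mat D2 + B2 * L1)
     \<and> invertible_mat (A1b + B1b * L1)
     \<and> similar_mat (D2b - L2 * B2b) (transpose_mat (inv_mat (A1b + B1b * L1)))"
proof -
  define X where "X = A1 + transpose_mat B1 * L1"
  define H1 where "H1 = A1b + B1b * L1"
  define Y where "Y = transpose_mat D2 + B2 * L1"
  define M1 where "M1 = four_block_mat A1 (transpose_mat B1) B1 D1"
  define M2 where "M2 = four_block_mat D2 B2 (transpose_mat B2) A2"
  have A1s: "transpose_mat A1 = A1" using A1_pd unfolding pos_def_mat_def by auto
  have A2s: "transpose_mat A2 = A2" using A2_pd unfolding pos_def_mat_def by auto
  have X: "X \<in> carrier_mat d1 d1" unfolding X_def using A1 B1 L1 by auto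
  have H1: "H1 \<in> carrier_mat d1 d1" unfolding H1_def using A1b B1b L1 by auto
  have Y: "Y \<in> carrier_mat d1 d1" unfolding Y_def using D2 B2 L1 by auto
  have M1: "M1 \<in> carrier_mat (d1+d2) (d1+d2)" unfolding M1_def using A1 B1 D1 by auto
  have M2: "M2 \<in> carrier_mat (d1+d2) (d1+d2)" unfolding M2_def using A2 B2 D2 by auto
  note iX = inv_mat_props[OF X X_inv[folded X_def]]
  note iH = inv_mat_props[OF H1 fp_inv[folded H1_def]]
  note iM1 = inv_mat_props[OF M1 M1_inv[folded M1_def]]
  note iM2 = inv_mat_props[OF M2 M2_inv[folded M2_def]]
  have tr: "transpose_mat A1 \<in> carrier_mat d1 d1" "transpose_mat B1 \<in> carrier_mat d1 d2"
    "transpose_mat D1 \<in> carrier_mat d2 d2" "transpose_mat A2 \<in> carrier_mat d2 d2"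
    "transpose_mat B2 \<in> carrier_mat d2 d1" "transpose_mat D2 \<in> carrier_mat d1 d1"
    "transpose_mat A1b \<in> carrier_mat d1 d1" "transpose_mat B1b \<in> carrier_mat d2 d1"
    "transpose_mat C1b \<in> carrier_mat d1 d2" "transpose_mat D1b \<in> carrier_mat d2 d2"
    "transpose_mat D2b \<in> carrier_mat d1 d1" "transpose_mat C2b \<in> carrier_mat d2 d1"
    "transpose_mat B2b \<in> carrier_mat d1 d2" "transpose_mat A2b \<in> carrier_mat d2 d2"
    "transpose_mat L1 \<in> carrier_mat d1 d2" "transpose_mat L2 \<in> carrier_mat d2 d1"
    using A1 B1 D1 A2 B2 D2 A1b B1b C1b D1b D2b C2b B2b A2b L1 L2 by auto
  note cr = A1 B1 D1 A2 B2 D2 A1b B1b C1b D1b D2b C2b B2b A2b L1 L2 tr X H1 Y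
  have F1: "L1 * H1 = C1b + D1b * L1"
  proof -
    have "L1 * H1 = (C1b + D1b * L1) * inv_mat H1 * H1" using fp H1_def by simp
    also have "\<dots> = (C1b + D1b * L1) * (inv_mat H1 * H1)"
      using assoc_mult_mat[OF _ iH(1) H1, of "C1b + D1b * L1" d2] C1b D1b L1 by auto
    finally show ?thesis using iH C1b D1b L1 by simp
  qed
  have M1b': "transpose_mat M2 * four_block_mat A1b B1b C1b D1b = M1"
  proof -
    have "transpose_mat M2 * transpose_mat (inv_mat M2) = 1\<^sub>m (d1+d2)"
      using transpose_mult[OF iM2(1) M2] iM2(3) by simp
    then show ?thesis unfolding M1b M1_def[symmetric] M2_def[symmetric]
      using M1 M2 iM2 by (subst assoc_mult_mat[symmetric]) auto
  qed
  have M2b': "transpose_mat (four_block_mat D2b C2b B2b A2b) * M1 = transpose_mat M2"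
  proof -
    have "transpose_mat (four_block_mat D2b C2b B2b A2b) = transpose_mat M2 * inv_mat M1"
      unfolding M2b M1_def[symmetric] M2_def[symmetric]
      using transpose_mult[OF transpose_carrier_mat[THEN iffD2, OF iM1(1)] M2] by simp
    then show ?thesis using M1 M2 iM1 by simp
  qed
  have M2t: "transpose_mat M2 = four_block_mat (transpose_mat D2) B2 (transpose_mat B2) A2"
    unfolding M2_def using A2 B2 D2 A2s by (subst transpose_four_block_mat) auto
  have M2bt: "transpose_mat (four_block_mat D2b C2b B2b A2b) = four_block_mat (transpose_mat D2b) (transpose_mat B2b) (transpose_mat C2b) (transpose_mat A2b)"
    using A2b B2b C2b D2b by (subst transpose_four_block_mat) auto
  have "four_block_mat (transpose_mat D2 * A1b + B2 * C1b) (transpose_mat D2 * B1b + B2 * D1b)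
     (transpose_mat B2 * A1b + A2 * C1b) (transpose_mat B2 * B1b + A2 * D1b) = four_block_mat A1 (transpose_mat B1) B1 D1"
    using M1b' unfolding M2t M1_def using A1b B1b C1b D1b A2 B2 D2
    by (subst (asm) mult_four_block_mat[of _ d1 d1 _ d2 _ d2 _ _ d1 _ d2]) auto
  from four_block_inj[OF _ _ _ _ _ _ _ _ this] A1b B1b C1b D1b A2 B2 D2 A1 B1 D1
  have K1: "transpose_mat D2 * A1b + B2 * C1b = A1" and K2: "transpose_mat D2 * B1b + B2 * D1b = transpose_mat B1"
    and K3: "transpose_mat B2 * A1b + A2 * C1b = B1" and K4: "transpose_mat B2 * B1b + A2 * D1b = D1"
    by (meson add_carrier_mat mult_carrier_mat transpose_carrier_mat)+
  have "four_block_mat (transpose_mat D2b * A1 + transpose_mat B2b * B1) (transpose_mat D2b * transpose_mat B1 + transpose_mat B2b * D1)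
     (transpose_mat C2b * A1 + transpose_mat A2b * B1) (transpose_mat C2b * transpose_mat B1 + transpose_mat A2b * D1)
     = four_block_mat (transpose_mat D2) B2 (transpose_mat B2) A2"
    using M2b' unfolding M2t M2bt M1_def using A2b B2b C2b D2b A1 B1 D1
    by (subst (asm) mult_four_block_mat[of _ d1 d1 _ d2 _ d2 _ _ d1 _ d2]) auto
  from four_block_inj[OF _ _ _ _ _ _ _ _ this] A2b B2b C2b D2b A1 B1 D1 A2 B2 D2
  have G1: "transpose_mat D2b * A1 + transpose_mat B2b * B1 = transpose_mat D2"
    and G2: "transpose_mat D2b * transpose_mat B1 + transpose_mat B2b * D1 = B2"
    and G3: "transpose_mat C2b * A1 + transpose_mat A2b * B1 = transpose_mat B2"
    and G4: "transpose_mat C2b * transpose_mat B1 + transpose_mat A2b * D1 = A2"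
    by (meson add_carrier_mat mult_carrier_mat transpose_carrier_mat)+
  define W1 where "W1 = B1 + D1 * L1"
  define W2 where "W2 = transpose_mat B2 + A2 * L1"
  have W1: "W1 \<in> carrier_mat d2 d1" unfolding W1_def using B1 D1 L1 by auto
  have W2: "W2 \<in> carrier_mat d2 d1" unfolding W2_def using B2 A2 L1 by auto
  note cr = cr W1 W2 iX(1) iH(1)
  have P1: "Y * H1 = X"
  proof -
    have "Y * H1 = transpose_mat D2 * H1 + B2 * (L1 * H1)"
      unfolding Y_def using cr by (simp add: dadd_mult dassoc)
    also have "\<dots> = (transpose_mat D2 * A1b + B2 * C1b) + (transpose_mat D2 * B1b + B2 * D1b) * L1"
      unfolding F1 using cr
      by (unfold H1_def, simp add: mat_ring) (rule eq_matI; simp)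
    finally show ?thesis unfolding K1 K2 X_def .
  qed
  have P2: "W2 * H1 = W1"
  proof -
    have "W2 * H1 = transpose_mat B2 * H1 + A2 * (L1 * H1)"
      unfolding W2_def using cr by (simp add: dadd_mult dassoc)
    also have "\<dots> = (transpose_mat B2 * A1b + A2 * C1b) + (transpose_mat B2 * B1b + A2 * D1b) * L1"
      unfolding F1 using cr
      by (unfold H1_def, simp add: mat_ring) (rule eq_matI; simp)
    finally show ?thesis unfolding K3 K4 W1_def .
  qed
  have Q: "transpose_mat L2 * X = - W1"
  proof -
    have "transpose_mat L2 * X = - (W1 * inv_mat X * X)"
      using cr unfolding L2_def X_def[symmetric] W1_def[symmetric] by simp
    also have "\<dots> = - (W1 * (inv_mat X * X))" using cr by (simp add: dassoc)
    finally show ?thesis using iX W1 by simp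
  qed
  have Zt: "transpose_mat L2 * Y + W2 = 0\<^sub>m d2 d1"
  proof -
    have "(transpose_mat L2 * Y + W2) * H1 = transpose_mat L2 * (Y * H1) + W2 * H1"
      using cr by (simp add: dadd_mult dassoc)
    also have "\<dots> = 0\<^sub>m d2 d1" unfolding P1 P2 Q using W1 by simp
    finally have z: "(transpose_mat L2 * Y + W2) * H1 = 0\<^sub>m d2 d1" .
    have "transpose_mat L2 * Y + W2 = (transpose_mat L2 * Y + W2) * (H1 * inv_mat H1)"
      using iH cr by simp
    also have "\<dots> = ((transpose_mat L2 * Y + W2) * H1) * inv_mat H1"
      using cr by (simp add: dassoc)
    finally show ?thesis unfolding z using iH by simp
  qed
  define E where "E = D2b * L2 + C2b - L2 * (A2b + B2b * L2)"
  have Et: "transpose_mat E = transpose_mat L2 * transpose_mat D2b + transpose_mat C2b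
     - (transpose_mat A2b + transpose_mat L2 * transpose_mat B2b) * transpose_mat L2"
    unfolding E_def using cr by (simp add: mat_trans)
  have EtX: "transpose_mat E * X = 0\<^sub>m d2 d1"
  proof -
    have "transpose_mat E * X = transpose_mat L2 * (transpose_mat D2b * X) + transpose_mat C2b * X
        + transpose_mat A2b * W1 + transpose_mat L2 * (transpose_mat B2b * W1)"
      unfolding Et using cr by (simp add: mat_ring Q) (rule eq_matI; simp)
    also have "\<dots> = transpose_mat L2 * ((transpose_mat D2b * A1 + transpose_mat B2b * B1)
          + (transpose_mat D2b * transpose_mat B1 + transpose_mat B2b * D1) * L1)
        + ((transpose_mat C2b * A1 + transpose_mat A2b * B1) + (transpose_mat C2b * transpose_mat B1 + transpose_mat A2b * D1) * L1)"
      using cr unfolding X_def W1_def by (simp add: mat_ring) (rule eq_matI; simp)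
    also have "\<dots> = transpose_mat L2 * Y + W2" unfolding G1 G2 G3 G4 Y_def W2_def ..
    finally show ?thesis using Zt by simp
  qed
  have Et0: "transpose_mat E = 0\<^sub>m d2 d1"
  proof -
    have Ec: "transpose_mat E \<in> carrier_mat d2 d1" unfolding Et using cr by (intro carrier_matI) simp_all
    have "transpose_mat E = transpose_mat E * (X * inv_mat X)" using Ec iX by simp
    also have "\<dots> = (transpose_mat E * X) * inv_mat X" using Ec cr by (simp add: dassoc)
    finally show ?thesis unfolding EtX using iX by simp
  qed
  have E0: "E = 0\<^sub>m d1 d2"
  proof -
    have "E = transpose_mat (transpose_mat E)" by simp
    also have "\<dots> = 0\<^sub>m d1 d2" unfolding Et0 by simp
    finally show ?thesis .
  qed
  have Eq2: "D2b * L2 + C2b = L2 * (A2b + B2b * L2)"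
    by (rule dminus_eq0[OF _ _ E0[unfolded E_def]]) (use cr in simp_all)
  have C11a: "(transpose_mat D2b - transpose_mat B2b * transpose_mat L2) * X = Y"
  proof -
    have "(transpose_mat D2b - transpose_mat B2b * transpose_mat L2) * X = transpose_mat D2b * X + transpose_mat B2b * W1"
      using cr by (simp add: mat_ring Q) (rule eq_matI; simp)
    also have "\<dots> = (transpose_mat D2b * A1 + transpose_mat B2b * B1) + (transpose_mat D2b * transpose_mat B1 + transpose_mat B2b * D1) * L1"
      using cr unfolding X_def W1_def by (simp add: mat_ring) (rule eq_matI; simp)
    also have "\<dots> = Y" unfolding G1 G2 Y_def ..
    finally show ?thesis .
  qed
  have C11b: "transpose_mat D2b - transpose_mat B2b * transpose_mat L2 = Y * inv_mat X"
  proof -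
    have c: "transpose_mat D2b - transpose_mat B2b * transpose_mat L2 \<in> carrier_mat d1 d1" using cr by (intro carrier_matI) simp_all
    have "transpose_mat D2b - transpose_mat B2b * transpose_mat L2 = (transpose_mat D2b - transpose_mat B2b * transpose_mat L2) * (X * inv_mat X)"
      using c iX cr by simp
    also have "\<dots> = ((transpose_mat D2b - transpose_mat B2b * transpose_mat L2) * X) * inv_mat X"
      using c cr by (simp add: dassoc)
    finally show ?thesis unfolding C11a .
  qed
  have C11: "D2b - L2 * B2b = transpose_mat (inv_mat X) * transpose_mat Y"
  proof -
    have "D2b - L2 * B2b = transpose_mat (transpose_mat D2b - transpose_mat B2b * transpose_mat L2)"
      using cr by (simp add: mat_trans)
    also have "\<dots> = transpose_mat (Y * inv_mat X)" unfolding C11b ..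
    also have "\<dots> = transpose_mat (inv_mat X) * transpose_mat Y" using cr by (simp add: mat_trans)
    finally show ?thesis .
  qed
  have YX: "Y = X * inv_mat H1"
  proof -
    have "Y = Y * (H1 * inv_mat H1)" using iH cr by simp
    also have "\<dots> = (Y * H1) * inv_mat H1" using cr by (simp add: dassoc)
    finally show ?thesis unfolding P1 .
  qed
  have Yi1: "Y * (H1 * inv_mat X) = 1\<^sub>m d1"
  proof -
    have "Y * (H1 * inv_mat X) = (Y * H1) * inv_mat X" using cr by (simp add: dassoc)
    then show ?thesis unfolding P1 using iX by simp
  qed
  have Yi2: "(H1 * inv_mat X) * Y = 1\<^sub>m d1"
  proof -
    have "(H1 * inv_mat X) * Y = H1 * ((inv_mat X * X) * inv_mat H1)" unfolding YX using cr by (simp add: dassoc)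
    then show ?thesis using iX iH cr by simp
  qed
  have HX: "H1 * inv_mat X \<in> carrier_mat d1 d1" using cr by (intro carrier_matI) simp_all
  note Yinv = inv_mat_unique[OF Y HX Yi1 Yi2]
  have C10: "H1 = inv_mat Y * X"
  proof -
    have "inv_mat Y * X = H1 * (inv_mat X * X)" unfolding Yinv(2) using cr by (simp add: dassoc)
    then show ?thesis using iX cr by simp
  qed
  have iHe: "inv_mat H1 = inv_mat X * Y"
  proof -
    have "inv_mat X * Y = (inv_mat X * X) * inv_mat H1" unfolding YX using cr by (simp add: dassoc)
    then show ?thesis using iX cr by simp
  qed
  have C13: "similar_mat (D2b - L2 * B2b) (transpose_mat (inv_mat H1))"
  proof (rule similar_matI[of _ _ "transpose_mat (inv_mat X)" "transpose_mat X" d1])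
    show "{D2b - L2 * B2b, transpose_mat (inv_mat H1), transpose_mat (inv_mat X), transpose_mat X} \<subseteq> carrier_mat d1 d1"
      using cr by (auto intro!: carrier_matI)
    show "transpose_mat (inv_mat X) * transpose_mat X = 1\<^sub>m d1"
      using iX cr by (simp add: dtrans_mult[symmetric])
    show "transpose_mat X * transpose_mat (inv_mat X) = 1\<^sub>m d1"
      using iX cr by (simp add: dtrans_mult[symmetric])
    have "transpose_mat (inv_mat X) * transpose_mat (inv_mat H1) * transpose_mat X
        = transpose_mat (inv_mat X) * transpose_mat Y * (transpose_mat (inv_mat X) * transpose_mat X)"
      unfolding iHe using cr by (simp add: mat_trans dassoc)
    also have "\<dots> = transpose_mat (inv_mat X) * transpose_mat Y"
      using iX cr by (simp add: dtrans_mult[symmetric])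
    finally show "D2b - L2 * B2b = transpose_mat (inv_mat X) * transpose_mat (inv_mat H1) * transpose_mat X"
      unfolding C11 by simp
  qed
  have o1: "1\<^sub>m d1 \<in> carrier_mat d1 d1" and o2: "1\<^sub>m d2 \<in> carrier_mat d2 d2"
    and z12: "0\<^sub>m d1 d2 \<in> carrier_mat d1 d2" and z21: "0\<^sub>m d2 d1 \<in> carrier_mat d2 d1"
    and mL1: "- L1 \<in> carrier_mat d2 d1" and mL2: "- L2 \<in> carrier_mat d1 d2" using cr by auto
  have C1: "four_block_mat (1\<^sub>m d1) (0\<^sub>m d1 d2) (- L1) (1\<^sub>m d2) * four_block_mat (1\<^sub>m d1) (0\<^sub>m d1 d2) L1 (1\<^sub>m d2)
       = 1\<^sub>m (d1 + d2)"
    apply (subst mult_four_block_mat[OF o1 z12 mL1 o2 o1 z12 L1 o2])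
    apply (subst four_block_one_mat[symmetric])
    apply (rule cong_four_block_mat)
    using cr by simp_all
  have C3: "four_block_mat (1\<^sub>m d1) (- L2) (0\<^sub>m d2 d1) (1\<^sub>m d2) * four_block_mat (1\<^sub>m d1) L2 (0\<^sub>m d2 d1) (1\<^sub>m d2)
       = 1\<^sub>m (d1 + d2)"
    apply (subst mult_four_block_mat[OF o1 mL2 z21 o2 o1 L2 z21 o2])
    apply (subst four_block_one_mat[symmetric])
    apply (rule cong_four_block_mat)
    apply (insert cr)
    apply simp_all
    by (rule eq_matI; simp)
  have C2: "four_block_mat (1\<^sub>m d1) (0\<^sub>m d1 d2) (- L1) (1\<^sub>m d2) * four_block_mat A1b B1b C1b D1b
         * four_block_mat (1\<^sub>m d1) (0\<^sub>m d1 d2) L1 (1\<^sub>m d2)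
       = four_block_mat (A1b + B1b * L1) B1b (0\<^sub>m d2 d1) (D1b - L1 * B1b)"
  proof -
    have s1: "four_block_mat (1\<^sub>m d1) (0\<^sub>m d1 d2) (- L1) (1\<^sub>m d2) * four_block_mat A1b B1b C1b D1b
       = four_block_mat A1b B1b (C1b - L1 * A1b) (D1b - L1 * B1b)"
      apply (subst mult_four_block_mat[OF o1 z12 mL1 o2 A1b B1b C1b D1b])
      apply (rule cong_four_block_mat)
      apply (insert cr)
      apply simp_all
      by (rule eq_matI; simp)+
    have c1: "C1b - L1 * A1b \<in> carrier_mat d2 d1" and c2: "D1b - L1 * B1b \<in> carrier_mat d2 d2"
      using cr by (intro carrier_matI, simp_all)+
    have z: "C1b - L1 * A1b + (D1b - L1 * B1b) * L1 = 0\<^sub>m d2 d1"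
    proof -
      have "C1b - L1 * A1b + (D1b - L1 * B1b) * L1 = (C1b + D1b * L1) - L1 * H1"
        unfolding H1_def using cr by (simp add: mat_ring) (rule eq_matI; simp)
      then show ?thesis unfolding F1[symmetric] using cr by simp
    qed
    show ?thesis unfolding s1
      apply (subst mult_four_block_mat[OF A1b B1b c1 c2 o1 z12 L1 o2])
      apply (rule cong_four_block_mat)
      using cr z c1 c2 by simp_all
  qed
  have C4: "four_block_mat (1\<^sub>m d1) (- L2) (0\<^sub>m d2 d1) (1\<^sub>m d2) * four_block_mat D2b C2b B2b A2b
         * four_block_mat (1\<^sub>m d1) L2 (0\<^sub>m d2 d1) (1\<^sub>m d2)
       = four_block_mat (D2b - L2 * B2b) (0\<^sub>m d1 d2) B2b (A2b + B2b * L2)"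
  proof -
    have s1: "four_block_mat (1\<^sub>m d1) (- L2) (0\<^sub>m d2 d1) (1\<^sub>m d2) * four_block_mat D2b C2b B2b A2b
       = four_block_mat (D2b - L2 * B2b) (C2b - L2 * A2b) B2b A2b"
      apply (subst mult_four_block_mat[OF o1 mL2 z21 o2 D2b C2b B2b A2b])
      apply (rule cong_four_block_mat)
      apply (insert cr)
      apply simp_all
      by (rule eq_matI; simp)+
    have c1: "D2b - L2 * B2b \<in> carrier_mat d1 d1" and c2: "C2b - L2 * A2b \<in> carrier_mat d1 d2"
      using cr by (intro carrier_matI, simp_all)+
    have z: "(D2b - L2 * B2b) * L2 + (C2b - L2 * A2b) = 0\<^sub>m d1 d2"
    proof -
      have "(D2b - L2 * B2b) * L2 + (C2b - L2 * A2b) = E"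
        unfolding E_def using cr by (simp add: mat_ring) (rule eq_matI; simp)
      then show ?thesis unfolding E0 .
    qed
    have z2: "B2b * L2 + A2b = A2b + B2b * L2" using cr by (rule_tac eq_matI; simp)
    show ?thesis unfolding s1
      apply (subst mult_four_block_mat[OF c1 c2 B2b A2b o1 L2 z21 o2])
      apply (rule cong_four_block_mat)
      using cr z z2 c1 c2 by simp_all
  qed
  have C5: "four_block_mat A1b B1b C1b D1b * (1\<^sub>m d1 @\<^sub>r L1) = (1\<^sub>m d1 @\<^sub>r L1) * H1"
  proof -
    have H1e: "H1 = four_block_mat H1 (0\<^sub>m d1 0) (0\<^sub>m 0 d1) (0\<^sub>m 0 0)" using H1 by (intro eq_matI) auto
    have "four_block_mat A1b B1b C1b D1b * (1\<^sub>m d1 @\<^sub>r L1) = four_block_mat H1 (0\<^sub>m d1 0) (L1 * H1) (0\<^sub>m d2 0)"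
      unfolding append_rows_def
      apply (subst mult_four_block_mat[of _ d1 d1 _ d2 _ d2 _ _ d1 _ 0])
      using cr apply (simp_all)[8]
      apply (rule cong_four_block_mat)
      using cr by (simp_all add: H1_def[symmetric] F1[symmetric])
    also have "\<dots> = four_block_mat (1\<^sub>m d1) (0\<^sub>m d1 0) L1 (0\<^sub>m d2 0) * four_block_mat H1 (0\<^sub>m d1 0) (0\<^sub>m 0 d1) (0\<^sub>m 0 0)"
      apply (subst mult_four_block_mat[of _ d1 d1 _ 0 _ d2 _ _ d1 _ 0])
      using cr by simp_all
    also have "\<dots> = (1\<^sub>m d1 @\<^sub>r L1) * H1"
      unfolding append_rows_def using cr H1e[symmetric] by simp
    finally show ?thesis .
  qed
  have C7: "four_block_mat D2b C2b B2b A2b * (L2 @\<^sub>r 1\<^sub>m d2) = (L2 @\<^sub>r 1\<^sub>m d2) * (A2b + B2b * L2)"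
  proof -
    have H2: "A2b + B2b * L2 \<in> carrier_mat d2 d2" using cr by (intro carrier_matI) simp_all
    have H2e: "A2b + B2b * L2 = four_block_mat (A2b + B2b * L2) (0\<^sub>m d2 0) (0\<^sub>m 0 d2) (0\<^sub>m 0 0)"
      using H2 by (intro eq_matI) auto
    have "four_block_mat D2b C2b B2b A2b * (L2 @\<^sub>r 1\<^sub>m d2) = four_block_mat (L2 * (A2b + B2b * L2)) (0\<^sub>m d1 0) (A2b + B2b * L2) (0\<^sub>m d2 0)"
      unfolding append_rows_def
      apply (subst mult_four_block_mat[of _ d1 d1 _ d2 _ d2 _ _ d2 _ 0])
      using cr apply (simp_all)[8]
      apply (rule cong_four_block_mat)
      using cr Eq2 apply simp_all
      by (rule eq_matI; simp)
    also have "\<dots> = four_block_mat L2 (0\<^sub>m d1 0) (1\<^sub>m d2) (0\<^sub>m d2 0) * four_block_mat (A2b + B2b * L2) (0\<^sub>m d2 0) (0\<^sub>m 0 d2) (0\<^sub>m 0 0)"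
      apply (subst mult_four_block_mat[of _ d1 d2 _ 0 _ d2 _ _ d2 _ 0])
      using cr H2 by simp_all
    also have "\<dots> = (L2 @\<^sub>r 1\<^sub>m d2) * (A2b + B2b * L2)"
      unfolding append_rows_def using cr H2e[symmetric] by simp
    finally show ?thesis .
  qed
  have C6: "subspace_spec (four_block_mat A1b B1b C1b D1b) (1\<^sub>m d1 @\<^sub>r L1) = spec_mat H1"
  proof (rule spec_lemma[OF _ _ H1 _ _ C5])
    show "four_block_mat A1b B1b C1b D1b \<in> carrier_mat (d1 + d2) (d1 + d2)" using cr by auto
    show "1\<^sub>m d1 @\<^sub>r L1 \<in> carrier_mat (d1 + d2) d1" using cr by auto
    show "four_block_mat (1\<^sub>m d1) (0\<^sub>m d1 d2) (0\<^sub>m 0 d1) (0\<^sub>m 0 d2) \<in> carrier_mat d1 (d1 + d2)"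
      using four_block_carrier_mat[of "1\<^sub>m d1" d1 d1 "0\<^sub>m 0 d2" 0 d2] by simp
    show "four_block_mat (1\<^sub>m d1) (0\<^sub>m d1 d2) (0\<^sub>m 0 d1) (0\<^sub>m 0 d2) * (1\<^sub>m d1 @\<^sub>r L1) = 1\<^sub>m d1"
      unfolding append_rows_def using cr
      by (subst mult_four_block_mat[of _ d1 d1 _ d2 _ 0 _ _ d1 _ 0], auto)
  qed
  have C8: "subspace_spec (four_block_mat D2b C2b B2b A2b) (L2 @\<^sub>r 1\<^sub>m d2) = spec_mat (A2b + B2b * L2)"
  proof (rule spec_lemma[OF _ _ _ _ _ C7])
    show "four_block_mat D2b C2b B2b A2b \<in> carrier_mat (d1 + d2) (d1 + d2)" using cr by auto
    show "L2 @\<^sub>r 1\<^sub>m d2 \<in> carrier_mat (d1 + d2) d2" using cr by auto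
    show "A2b + B2b * L2 \<in> carrier_mat d2 d2" using cr by (intro carrier_matI) simp_all
    show "four_block_mat (0\<^sub>m d2 d1) (1\<^sub>m d2) (0\<^sub>m 0 d1) (0\<^sub>m 0 d2) \<in> carrier_mat d2 (d1 + d2)"
      using four_block_carrier_mat[of "0\<^sub>m d2 d1" d2 d1 "0\<^sub>m 0 d2" 0 d2] by simp
    show "four_block_mat (0\<^sub>m d2 d1) (1\<^sub>m d2) (0\<^sub>m 0 d1) (0\<^sub>m 0 d2) * (L2 @\<^sub>r 1\<^sub>m d2) = 1\<^sub>m d2"
      unfolding append_rows_def using cr
      by (subst mult_four_block_mat[of _ d2 d1 _ d2 _ 0 _ _ d2 _ 0], auto)
  qed
  show ?thesis
    using C1 C2 C3 C4 C5 C6 C7 C8 Yinv(1) C10 C11 C13 fp_inv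
    unfolding X_def Y_def H1_def by blast
qed

end
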